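(* Let $\mathbf{x},\mathbf{y}$ lie in the upper half-plane and let $\mathbf{B}=\frac12\begin{pmatrix}\mathbf{x}+\mathbf{y}&\mathbf{x}-\mathbf{y}\\ \mathbf{x}-\mathbf{y}&\mathbf{x}+\mathbf{y}\end{pmatrix}$. Then $$\mathcal{F}(\mathbf{B})=\frac14\, f^3(\mathbf{x})f^3(\mathbf{y})\,(\mathrm{Im}\,\mathbf{x})(\mathrm{Im}\,\mathbf{y})\,\left|\vartheta_3^4(\mathbf{x})\vartheta_4^4(\mathbf{y})-\vartheta_4^4(\mathbf{x})\vartheta_3^4(\mathbf{y})\right|,$$ where $f(\sigma)=(\mathrm{Im}\,\sigma)^{1/2}|\vartheta_2(\sigma)\vartheta_3(\sigma)\vartheta_4(\sigma)|^{2/3}$.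
   Context: $\mathcal{F}(\mathbf{B})=(\det\mathrm{Im}\,\mathbf{B})^{5/2}\prod_{s=1}^{10}|\Theta[\beta_s](\mathbf{B})|$, where for $\mathbf{p},\mathbf{q}\in\{0,\frac12\}^2$, $\Theta[^{\mathbf{p}}_{\mathbf{q}}](\mathbf{B})=\sum_{\mathbf{m}\in\mathbb{Z}^2}\exp\{\pi i\langle\mathbf{B}(\mathbf{m}+\mathbf{p}),\mathbf{m}+\mathbf{p}\rangle+2\pi i\langle\mathbf{m}+\mathbf{p},\mathbf{q}\rangle\}$, and $\beta_1,\dots,\beta_{10}$ are the ten even characteristics ($4\langle\mathbf{p},\mathbf{q}\rangle$ even). The genus one theta constants are $\vartheta_2(\sigma)=\sum_{n\in\mathbb{Z}}e^{\pi i\sigma(n+1/2)^2}$, $\vartheta_3(\sigma)=\sum_{n}e^{\pi i\sigma n^2}$, $\vartheta_4(\sigma)=\sum_n(-1)^ne^{\pi i\sigma n^2}$. *)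

theory Defs
  imports "HOL-Analysis.Analysis"
begin

text \<open>The bilinear form is the (unconjugated) quadratic form: sum_ij B_ij v_i v_j.\<close>

definition vec2 :: "real \<Rightarrow> real \<Rightarrow> real^2" where
  "vec2 a b = (\<chi> i. if i = 1 then a else b)"

definition theta2 :: "real^2 \<Rightarrow> real^2 \<Rightarrow> complex^2^2 \<Rightarrow> complex" where
  "theta2 p q B = (\<Sum>\<^sub>\<infinity>m\<in>(UNIV :: (int \<times> int) set).
     (let v = vec2 (of_int (fst m) + p$1) (of_int (snd m) + p$2) in
       exp (pi * \<i> * (\<Sum>i\<in>UNIV. \<Sum>j\<in>UNIV. B$i$j * of_real (v$i) * of_real (v$j))
            + 2 * pi * \<i> * of_real (v \<bullet> q))))"

definition half_chars :: "(real^2) set" where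
  "half_chars = {v. \<forall>i. v$i \<in> {0, 1/2}}"

definition even_chars :: "((real^2) \<times> (real^2)) set" where
  "even_chars = {(p, q). p \<in> half_chars \<and> q \<in> half_chars \<and> even (\<lfloor>4 * (p \<bullet> q)\<rfloor>)}"

definition Im_mat :: "complex^2^2 \<Rightarrow> real^2^2" where
  "Im_mat B = (\<chi> i j. Im (B$i$j))"

definition FF :: "complex^2^2 \<Rightarrow> real" where
  "FF B = (det (Im_mat B)) powr (5/2) * (\<Prod>(p,q)\<in>even_chars. cmod (theta2 p q B))"

definition jtheta2 :: "complex \<Rightarrow> complex" where
  "jtheta2 s = (\<Sum>\<^sub>\<infinity>n\<in>(UNIV :: int set). exp (pi * \<i> * s * (of_int n + 1/2)^2))"

definition jtheta3 :: "complex \<Rightarrow> complex" where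
  "jtheta3 s = (\<Sum>\<^sub>\<infinity>n\<in>(UNIV :: int set). exp (pi * \<i> * s * (of_int n)^2))"

definition jtheta4 :: "complex \<Rightarrow> complex" where
  "jtheta4 s = (\<Sum>\<^sub>\<infinity>n\<in>(UNIV :: int set). (-1) powi n * exp (pi * \<i> * s * (of_int n)^2))"

definition ff :: "complex \<Rightarrow> real" where
  "ff s = sqrt (Im s) * (cmod (jtheta2 s * jtheta3 s * jtheta4 s)) powr (2/3)"

end

theory Submission
  imports Defs
begin


definition gt :: "complex \<Rightarrow> real \<Rightarrow> real \<Rightarrow> int \<Rightarrow> complex" where
  "gt t a s n = exp (complex_of_real pi * \<i> * t * (complex_of_real (of_int n + a))\<^sup>2
      + complex_of_real (2 * pi) * \<i> * complex_of_real (s * of_int n))"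

definition G :: "complex \<Rightarrow> real \<Rightarrow> real \<Rightarrow> complex" where
  "G t a s = (\<Sum>\<^sub>\<infinity>n. gt t a s n)"

lemma norm_gt: "norm (gt t a s n) = exp (- pi * Im t * (of_int n + a)\<^sup>2)"
  unfolding gt_def by (simp add: norm_exp_eq_Re power2_eq_square)

lemma gauss_ineq:
  fixes c t a :: real assumes "c > 0"
  shows "- c * (t + a)\<^sup>2 \<le> c * (2*\<bar>a\<bar>+1)\<^sup>2/4 - c * \<bar>t\<bar>"
proof -
  have m: "-(t*a) \<le> \<bar>t\<bar>*\<bar>a\<bar>"
    by (metis abs_ge_minus_self abs_mult)
  have e: "(t + a)\<^sup>2 - (\<bar>t\<bar> - \<bar>a\<bar>)\<^sup>2 = 2*(t*a + \<bar>t\<bar>*\<bar>a\<bar>)"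
    by (simp add: power2_eq_square algebra_simps abs_mult_self_eq)
  have h1: "(t + a)\<^sup>2 \<ge> (\<bar>t\<bar> - \<bar>a\<bar>)\<^sup>2"
  proof -
    have "0 \<le> t*a + \<bar>t\<bar>*\<bar>a\<bar>" using m by linarith
    thus ?thesis by (subst diff_ge_0_iff_ge[symmetric], subst e) simp
  qed
  have h2: "(\<bar>t\<bar> - \<bar>a\<bar>)\<^sup>2 - \<bar>t\<bar> + (2*\<bar>a\<bar>+1)\<^sup>2/4 = (\<bar>t\<bar> - (2*\<bar>a\<bar>+1)/2)\<^sup>2 + a\<^sup>2"
    by (simp add: power2_eq_square field_simps)
  have "0 \<le> (\<bar>t\<bar> - (2*\<bar>a\<bar>+1)/2)\<^sup>2 + a\<^sup>2" by simp
  hence "\<bar>t\<bar> - (t + a)\<^sup>2 \<le> (2*\<bar>a\<bar>+1)\<^sup>2/4" using h1 h2 by linarith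
  hence "c * (\<bar>t\<bar> - (t + a)\<^sup>2) \<le> c * ((2*\<bar>a\<bar>+1)\<^sup>2/4)"
    using assms by (intro mult_left_mono) auto
  thus ?thesis by (simp add: algebra_simps)
qed

lemma int_split_summable:
  fixes g :: "int \<Rightarrow> real"
  assumes "(\<lambda>n. g (int n)) summable_on UNIV" "(\<lambda>n. g (- int n)) summable_on UNIV"
  shows "g summable_on UNIV"
proof -
  have a: "g summable_on range int"
    using assms(1) by (subst summable_on_reindex) (auto simp: o_def)
  have b: "g summable_on range (\<lambda>n. - int n)"
    using assms(2) by (subst summable_on_reindex) (auto simp: o_def inj_on_def)
  have "UNIV = range int \<union> range (\<lambda>n. - int n)"
  proof (intro set_eqI iffI)
    fix x :: int
    show "x \<in> range int \<union> range (\<lambda>n. - int n)"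
    proof (cases "x \<ge> 0")
      case True
      hence "x = int (nat x)" by simp
      thus ?thesis by blast
    next
      case False
      hence "x = - int (nat (-x))" by simp
      thus ?thesis by blast
    qed
  qed auto
  with summable_on_union[OF a b] show ?thesis by simp
qed

lemma gauss_summable:
  fixes c a :: real assumes "c > 0"
  shows "(\<lambda>n::int. exp (- c * (of_int n + a)\<^sup>2)) summable_on UNIV"
proof -
  define K where "K = c * (2*\<bar>a\<bar>+1)\<^sup>2/4"
  define g where "g = (\<lambda>n::int. exp K * exp (- c * \<bar>of_int n\<bar>))"
  have geo: "summable (\<lambda>n::nat. exp K * exp (-c) ^ n)"
    using assms by (intro summable_mult summable_geometric) auto
  have g1: "(\<lambda>n. g (int n)) summable_on UNIV"
  proof -
    have "(\<lambda>n::nat. exp K * exp (-c) ^ n) summable_on UNIV"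
      using geo by (subst summable_on_UNIV_nonneg_real_iff) auto
    moreover have "(\<lambda>n. g (int n)) = (\<lambda>n::nat. exp K * exp (-c) ^ n)"
      by (auto simp: g_def fun_eq_iff exp_of_nat_mult[symmetric] mult.commute)
    ultimately show ?thesis by simp
  qed
  have g2: "(\<lambda>n. g (- int n)) summable_on UNIV"
  proof -
    have "(\<lambda>n. g (- int n)) = (\<lambda>n. g (int n))" by (auto simp: g_def)
    with g1 show ?thesis by simp
  qed
  have "g summable_on UNIV" by (rule int_split_summable[OF g1 g2])
  then show ?thesis
  proof (rule summable_on_comparison_test)
    fix n :: int
    show "exp (- c * (of_int n + a)\<^sup>2) \<le> g n"
      unfolding g_def K_def exp_add[symmetric]
      using gauss_ineq[OF assms, of "of_int n" a] by simp
  qed simp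
qed

lemma gt_abs_summable: "Im t > 0 \<Longrightarrow> (\<lambda>n. norm (gt t a s n)) summable_on UNIV"
  unfolding norm_gt using gauss_summable[of "pi * Im t" a] by simp

lemma gt_summable: "Im t > 0 \<Longrightarrow> gt t a s summable_on UNIV"
  using gt_abs_summable summable_on_iff_abs_summable_on_complex by blast


lemma prod_has_sum:
  fixes f g :: "int \<Rightarrow> complex"
  assumes f: "f summable_on UNIV" and g: "g summable_on UNIV"
  shows "((\<lambda>(k,l). f k * g l) has_sum (infsum f UNIV * infsum g UNIV)) UNIV"
proof -
  have af: "(\<lambda>k. norm (f k)) summable_on UNIV"
    using f summable_on_iff_abs_summable_on_complex by blast
  have ag: "(\<lambda>k. norm (g k)) summable_on UNIV"
    using g summable_on_iff_abs_summable_on_complex by blast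
  have abs: "(\<lambda>z. norm ((\<lambda>(k,l). f k * g l) z)) summable_on (UNIV \<times> UNIV)"
  proof (rule iffD2[OF Infinite_Sum.abs_summable_on_Sigma_iff], intro conjI ballI)
    fix k :: int
    show "(\<lambda>l. norm ((\<lambda>(k, l). f k * g l) (k, l))) summable_on UNIV"
      using summable_on_cmult_right[OF ag, of "norm (f k)"] by (simp add: norm_mult)
  next
    have "(\<lambda>k. norm (f k) * (\<Sum>\<^sub>\<infinity>l. norm (g l))) summable_on UNIV"
      by (rule summable_on_cmult_left[OF af])
    moreover have "(\<Sum>\<^sub>\<infinity>l. norm ((\<lambda>(k, l). f k * g l) (k, l))) = norm (f k) * (\<Sum>\<^sub>\<infinity>l. norm (g l))" for k
      by (simp add: norm_mult infsum_cmult_right ag)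
    ultimately show "(\<lambda>k. norm (\<Sum>\<^sub>\<infinity>l\<in>UNIV. norm ((\<lambda>(k, l). f k * g l) (k, l)))) summable_on UNIV"
      by (simp add: infsum_nonneg)
  qed
  hence summ: "(\<lambda>(k,l). f k * g l) summable_on (UNIV \<times> UNIV)"
    using summable_on_iff_abs_summable_on_complex by blast
  have "infsum (\<lambda>(k,l). f k * g l) (UNIV \<times> UNIV) = (\<Sum>\<^sub>\<infinity>k. \<Sum>\<^sub>\<infinity>l. f k * g l)"
    using infsum_Sigma_banach[OF summ] by simp
  also have "\<dots> = (\<Sum>\<^sub>\<infinity>k. f k * infsum g UNIV)"
    by (simp add: infsum_cmult_right g)
  also have "\<dots> = infsum f UNIV * infsum g UNIV"
    by (simp add: infsum_cmult_left f)
  finally show ?thesis using summ has_sum_infsum by fastforce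
qed

lemma prod_has_sum_c:
  fixes f g :: "int \<Rightarrow> complex"
  assumes f: "f summable_on UNIV" and g: "g summable_on UNIV"
  shows "((\<lambda>(k,l). c * (f k * g l)) has_sum (c * (infsum f UNIV * infsum g UNIV))) UNIV"
proof -
  have "(\<lambda>(k,l). c * (f k * g l)) = (\<lambda>z. c * (\<lambda>(k,l). f k * g l) z)" by auto
  thus ?thesis using has_sum_cmult_right[OF prod_has_sum[OF f g], of c] by simp
qed

lemma reindex_Z2:
  fixes F :: "int \<times> int \<Rightarrow> complex"
  assumes A: "((\<lambda>(k,l). F (k+l, k-l)) has_sum A) UNIV"
    and B: "((\<lambda>(k,l). F (k+l+1, k-l)) has_sum B) UNIV"
  shows "(F has_sum (A+B)) UNIV"
proof -
  define h0 :: "int \<times> int \<Rightarrow> int \<times> int" where "h0 = (\<lambda>(k,l). (k+l, k-l))"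
  define h1 :: "int \<times> int \<Rightarrow> int \<times> int" where "h1 = (\<lambda>(k,l). (k+l+1, k-l))"
  have i0: "inj_on h0 UNIV" unfolding h0_def inj_on_def by auto
  have i1: "inj_on h1 UNIV" unfolding h1_def inj_on_def by auto
  have e0: "h0 ` UNIV = {z. even (fst z + snd z)}"
  proof (safe)
    fix n m :: int assume "even (fst (n,m) + snd (n,m))"
    hence "even (n+m)" by simp
    then obtain j where "n + m = 2 * j" by (rule evenE)
    hence "h0 (j, j - m) = (n, m)" unfolding h0_def by auto
    thus "(n, m) \<in> range h0" by (metis rangeI)
  qed (auto simp: h0_def)
  have e1: "h1 ` UNIV = {z. odd (fst z + snd z)}"
  proof (safe)
    fix n m :: int assume "odd (fst (n,m) + snd (n,m))"
    hence "odd (n+m)" by simp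
    then obtain j where "n + m = 2 * j + 1" by (rule oddE)
    hence "h1 (j, j - m) = (n, m)" unfolding h1_def by auto
    thus "(n, m) \<in> range h1" by (metis rangeI)
  qed (auto simp: h1_def)
  have "(F has_sum A) (h0 ` UNIV)"
  proof -
    have "F \<circ> h0 = (\<lambda>(k,l). F (k+l, k-l))" by (auto simp: h0_def fun_eq_iff)
    thus ?thesis using A by (subst has_sum_reindex[OF i0]) simp
  qed
  moreover have "(F has_sum B) (h1 ` UNIV)"
  proof -
    have "F \<circ> h1 = (\<lambda>(k,l). F (k+l+1, k-l))" by (auto simp: h1_def fun_eq_iff)
    thus ?thesis using B by (subst has_sum_reindex[OF i1]) simp
  qed
  ultimately have "(F has_sum (A+B)) (h0 ` UNIV \<union> h1 ` UNIV)"
    by (intro has_sum_Un_disjoint) (auto simp: e0 e1)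
  moreover have "h0 ` UNIV \<union> h1 ` UNIV = UNIV" unfolding e0 e1 by auto
  ultimately show ?thesis by simp
qed

lemma gt_pair0:
  "gt t a s (k+l) * gt t b r (k-l) = gt (2*t) ((a+b)/2) (s+r) k * gt (2*t) ((a-b)/2) (s-r) l"
  unfolding gt_def exp_add[symmetric]
  by (rule arg_cong[where f=exp]) (simp add: power2_eq_square field_simps)

lemma gt_pair1:
  "gt t a s (k+l+1) * gt t b r (k-l) = exp (complex_of_real (2 * pi) * \<i> * complex_of_real s) *
     (gt (2*t) ((a+b+1)/2) (s+r) k * gt (2*t) ((a-b+1)/2) (s-r) l)"
  unfolding gt_def exp_add[symmetric]
  by (rule arg_cong[where f=exp]) (simp add: power2_eq_square field_simps)

lemma PF:
  assumes "Im t > 0"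
  shows "G t a s * G t b r = G (2*t) ((a+b)/2) (s+r) * G (2*t) ((a-b)/2) (s-r)
     + exp (complex_of_real (2 * pi) * \<i> * complex_of_real s) *
       (G (2*t) ((a+b+1)/2) (s+r) * G (2*t) ((a-b+1)/2) (s-r))"
proof -
  have t2: "Im (2*t) > 0" using assms by simp
  define F where "F = (\<lambda>(n,m). gt t a s n * gt t b r m)"
  have "(F has_sum (G t a s * G t b r)) UNIV"
    unfolding F_def G_def by (rule prod_has_sum[OF gt_summable gt_summable]) (use assms in auto)
  moreover have "(F has_sum (G (2*t) ((a+b)/2) (s+r) * G (2*t) ((a-b)/2) (s-r)
     + exp (complex_of_real (2 * pi) * \<i> * complex_of_real s) *
       (G (2*t) ((a+b+1)/2) (s+r) * G (2*t) ((a-b+1)/2) (s-r)))) UNIV"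
  proof (rule reindex_Z2)
    show "((\<lambda>(k, l). F (k + l, k - l)) has_sum G (2*t) ((a+b)/2) (s+r) * G (2*t) ((a-b)/2) (s-r)) UNIV"
      unfolding F_def G_def using prod_has_sum[OF gt_summable[OF t2] gt_summable[OF t2]]
      by (simp add: gt_pair0)
    show "((\<lambda>(k, l). F (k + l + 1, k - l)) has_sum exp (complex_of_real (2 * pi) * \<i> * complex_of_real s) *
       (G (2*t) ((a+b+1)/2) (s+r) * G (2*t) ((a-b+1)/2) (s-r))) UNIV"
      unfolding F_def G_def using prod_has_sum_c[OF gt_summable[OF t2] gt_summable[OF t2]]
      by (simp add: gt_pair1)
  qed
  ultimately show ?thesis using has_sum_unique by blast
qed



lemma G_per: "G t a (s + 1) = G t a s"
proof -
  have "gt t a (s+1) n = gt t a s n" for n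
  proof -
    have "gt t a (s+1) n = gt t a s n * exp (\<i> * (of_int n * (of_real pi * 2)))"
      unfolding gt_def exp_add[symmetric] by (rule arg_cong[where f=exp]) (simp add: algebra_simps)
    thus ?thesis by simp
  qed
  hence "gt t a (s+1) = gt t a s" by (rule ext)
  thus ?thesis unfolding G_def by simp
qed

lemma G_per': "G t a (s - 1) = G t a s"
  using G_per[of t a "s - 1"] by simp

lemma G_shift: "G t (a + 1) s = exp (- complex_of_real (2*pi) * \<i> * complex_of_real s) * G t a s"
proof -
  have b: "bij_betw (\<lambda>m::int. m - 1) UNIV UNIV"
    by (rule bij_betwI[where g="\<lambda>m. m + 1"]) auto
  have "G t (a+1) s = (\<Sum>\<^sub>\<infinity>m. gt t (a+1) s (m - 1))"
    unfolding G_def by (rule infsum_reindex_bij_betw[OF b, symmetric])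
  also have "\<dots> = (\<Sum>\<^sub>\<infinity>m. exp (- complex_of_real (2*pi) * \<i> * complex_of_real s) * gt t a s m)"
  proof -
    have "gt t (a+1) s (m - 1) = exp (- complex_of_real (2*pi) * \<i> * complex_of_real s) * gt t a s m" for m
      unfolding gt_def exp_add[symmetric] by (rule arg_cong[where f=exp]) (simp add: algebra_simps)
    thus ?thesis by simp
  qed
  also have "\<dots> = exp (- complex_of_real (2*pi) * \<i> * complex_of_real s) * G t a s"
    unfolding G_def by (rule infsum_cmult_right')
  finally show ?thesis .
qed

lemma G_neg: "G t (- a) (- s) = G t a s"
proof -
  have b: "bij_betw (\<lambda>m::int. - m) UNIV UNIV"
    by (rule bij_betwI[where g="\<lambda>m. - m"]) auto
  have "G t (-a) (-s) = (\<Sum>\<^sub>\<infinity>m. gt t (-a) (-s) (- m))"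
    unfolding G_def by (rule infsum_reindex_bij_betw[OF b, symmetric])
  also have "\<dots> = G t a s"
  proof -
    have "gt t (-a) (-s) (- m) = gt t a s m" for m
      unfolding gt_def by (rule arg_cong[where f=exp]) (simp add: algebra_simps power2_eq_square)
    thus ?thesis unfolding G_def by simp
  qed
  finally show ?thesis .
qed

lemma exp_pi_int: "exp (complex_of_real pi * \<i> * of_int n) = (-1) powi n"
proof -
  have "(-1) powi n = exp (complex_of_real pi * \<i>) powi n" by simp
  also have "\<dots> = exp (of_int n * (complex_of_real pi * \<i>))" by (rule exp_power_int)
  finally show ?thesis by (simp add: mult.commute)
qed

lemma jtheta3_G: "jtheta3 s = G s 0 0"
  unfolding jtheta3_def G_def gt_def by simp

lemma jtheta2_G: "jtheta2 s = G s (1/2) 0"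
  unfolding jtheta2_def G_def gt_def by simp

lemma jtheta4_G: "jtheta4 s = G s 0 (1/2)"
proof -
  have "(-1) powi n * exp (complex_of_real pi * \<i> * s * (complex_of_int n)\<^sup>2) = gt s 0 (1/2) n" for n
    unfolding gt_def exp_pi_int[symmetric] exp_add[symmetric] mult_exp_exp
    by (rule arg_cong[where f=exp]) (simp add: algebra_simps)
  thus ?thesis unfolding jtheta4_def G_def by simp
qed

lemma vec2_nth [simp]: "vec2 a b $ 1 = a" "vec2 a b $ 2 = b"
  unfolding vec2_def by auto

lemma theta2_formula:
  assumes x: "Im x > 0" and y: "Im y > 0"
    and B: "B = (\<chi> i j. if i = j then (x + y) / 2 else (x - y) / 2)"
  shows "theta2 (vec2 p1 p2) (vec2 q1 q2) B =
    exp (complex_of_real (2*pi) * \<i> * complex_of_real (p1*q1+p2*q2)) *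
     (G (2*x) ((p1+p2)/2) (q1+q2) * G (2*y) ((p1-p2)/2) (q1-q2) +
      exp (complex_of_real (2*pi) * \<i> * complex_of_real q1) *
       (G (2*x) ((p1+p2+1)/2) (q1+q2) * G (2*y) ((p1-p2+1)/2) (q1-q2)))"
proof -
  have x2: "Im (2*x) > 0" and y2: "Im (2*y) > 0" using x y by auto
  define F where "F = (\<lambda>m::int\<times>int. (let v = vec2 (of_int (fst m) + vec2 p1 p2$1) (of_int (snd m) + vec2 p1 p2$2) in
       exp (pi * \<i> * (\<Sum>i\<in>UNIV. \<Sum>j\<in>UNIV. B$i$j * of_real (v$i) * of_real (v$j))
            + 2 * pi * \<i> * of_real (v \<bullet> vec2 q1 q2))))"
  define c0 where "c0 = exp (complex_of_real (2*pi) * \<i> * complex_of_real (p1*q1+p2*q2))"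
  define c1 where "c1 = c0 * exp (complex_of_real (2*pi) * \<i> * complex_of_real q1)"
  have Fv: "F (n, m) = exp (pi * \<i> * (x * (of_real (of_int n + p1 + of_int m + p2))\<^sup>2 / 2
       + y * (of_real (of_int n + p1 - of_int m - p2))\<^sup>2 / 2)
       + 2 * pi * \<i> * of_real ((of_int n + p1) * q1 + (of_int m + p2) * q2))" for n m
    unfolding F_def Let_def
    by (rule arg_cong[where f=exp]) (simp add: B sum_2 inner_vec_def power2_eq_square field_simps)
  have e0: "(\<lambda>(k,l). F (k+l, k-l)) = (\<lambda>(k,l). c0 * (gt (2*x) ((p1+p2)/2) (q1+q2) k * gt (2*y) ((p1-p2)/2) (q1-q2) l))"
  proof (intro ext, clarify)
    fix k l :: int
    show "F (k+l, k-l) = c0 * (gt (2*x) ((p1+p2)/2) (q1+q2) k * gt (2*y) ((p1-p2)/2) (q1-q2) l)"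
      unfolding Fv c0_def gt_def exp_add[symmetric]
      by (rule arg_cong[where f=exp]) (simp add: power2_eq_square field_simps)
  qed
  have e1: "(\<lambda>(k,l). F (k+l+1, k-l)) = (\<lambda>(k,l). c1 * (gt (2*x) ((p1+p2+1)/2) (q1+q2) k * gt (2*y) ((p1-p2+1)/2) (q1-q2) l))"
  proof (intro ext, clarify)
    fix k l :: int
    show "F (k+l+1, k-l) = c1 * (gt (2*x) ((p1+p2+1)/2) (q1+q2) k * gt (2*y) ((p1-p2+1)/2) (q1-q2) l)"
      unfolding Fv c1_def c0_def gt_def exp_add[symmetric]
      by (rule arg_cong[where f=exp]) (simp add: power2_eq_square field_simps)
  qed
  have "(F has_sum (c0 * (G (2*x) ((p1+p2)/2) (q1+q2) * G (2*y) ((p1-p2)/2) (q1-q2)) +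
     c1 * (G (2*x) ((p1+p2+1)/2) (q1+q2) * G (2*y) ((p1-p2+1)/2) (q1-q2)))) UNIV"
    by (rule reindex_Z2; unfold e0 e1 G_def; rule prod_has_sum_c[OF gt_summable[OF x2] gt_summable[OF y2]])
  hence "theta2 (vec2 p1 p2) (vec2 q1 q2) B = c0 * (G (2*x) ((p1+p2)/2) (q1+q2) * G (2*y) ((p1-p2)/2) (q1-q2)) +
     c1 * (G (2*x) ((p1+p2+1)/2) (q1+q2) * G (2*y) ((p1-p2+1)/2) (q1-q2))"
    unfolding theta2_def F_def[symmetric] by (rule infsumI)
  thus ?thesis unfolding c1_def c0_def by (simp add: algebra_simps)
qed




lemma vec2_eq_iff: "vec2 a b = vec2 c d \<longleftrightarrow> a = c \<and> b = d"
  by (auto simp: vec_eq_iff forall_2)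

lemma half_chars_eq: "half_chars = {vec2 0 0, vec2 0 (1/2), vec2 (1/2) 0, vec2 (1/2) (1/2)}"
proof (intro set_eqI iffI)
  fix v :: "real^2" assume "v \<in> half_chars"
  hence "v$1 \<in> {0, 1/2}" "v$2 \<in> {0, 1/2}" unfolding half_chars_def by auto
  moreover have "v = vec2 (v$1) (v$2)" by (simp add: vec_eq_iff forall_2)
  ultimately show "v \<in> {vec2 0 0, vec2 0 (1/2), vec2 (1/2) 0, vec2 (1/2) (1/2)}"
    by (metis empty_iff insert_iff)
qed (auto simp: half_chars_def forall_2)

lemma even_chars_eq: "even_chars = {(vec2 0 0, vec2 0 0), (vec2 0 0, vec2 0 (1/2)), (vec2 0 0, vec2 (1/2) 0), (vec2 0 0, vec2 (1/2) (1/2)),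
   (vec2 (1/2) (1/2), vec2 0 0), (vec2 (1/2) (1/2), vec2 (1/2) (1/2)),
   (vec2 (1/2) 0, vec2 0 0), (vec2 (1/2) 0, vec2 0 (1/2)),
   (vec2 0 (1/2), vec2 0 0), (vec2 0 (1/2), vec2 (1/2) 0)}"
  unfolding even_chars_def half_chars_eq
  by (auto simp: inner_vec_def sum_2)


lemma exp_mpi [simp]: "exp (- (complex_of_real pi * \<i>)) = -1"
  by (simp add: exp_minus)

lemma exp_m2pi [simp]: "exp (- (2 * complex_of_real pi * \<i>)) = 1"
  by (simp add: exp_minus)

lemma V1: "G t (1/2) (1/2) = 0"
proof -
  have "G t (1/2) (1/2) = G t (-(1/2) + 1) (1/2)" by simp
  also have "\<dots> = - G t (-(1/2)) (1/2)" unfolding G_shift by simp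
  also have "G t (-(1/2)) (1/2) = G t (1/2) (-(1/2))" using G_neg[of t "1/2" "-(1/2)"] by simp
  also have "\<dots> = G t (1/2) (1/2)" using G_per'[of t "1/2" "1/2"] by simp
  finally show ?thesis by simp
qed

lemma V2: "G t (1/2) (- (1/2)) = 0"
  using G_per'[of t "1/2" "1/2"] V1 by simp

lemma V3: "G t 0 (- (1/2)) = G t 0 (1/2)"
  using G_neg[of t 0 "1/2"] by simp

lemma V4: "G t 0 1 = G t 0 0"
  using G_per[of t 0 0] by simp

lemma V5: "G t (1/2) 1 = G t (1/2) 0"
  using G_per[of t "1/2" 0] by simp

lemma V6: "G t 1 0 = G t 0 0"
  using G_shift[of t 0 0] by simp

lemma V7: "G t 1 1 = G t 0 0"
  using G_shift[of t 0 1] V4 by simp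

lemma V10: "G t (- (1/4)) 0 = G t (1/4) 0"
  using G_neg[of t "1/4" 0] by simp

lemma V12: "G t (1/4) (- (1/2)) = G t (1/4) (1/2)"
  using G_per'[of t "1/4" "1/2"] by simp

lemma V11: "G t (- (1/4)) (1/2) = G t (1/4) (1/2)"
  using G_neg[of t "1/4" "-(1/2)"] V12 by simp

lemma V8: "G t (3/4) 0 = G t (1/4) 0"
proof -
  have "G t (3/4) 0 = G t (-(1/4) + 1) 0" by simp
  also have "\<dots> = G t (-(1/4)) 0" unfolding G_shift by simp
  finally show ?thesis using V10 by simp
qed

lemma V9: "G t (3/4) (1/2) = - G t (1/4) (1/2)"
proof -
  have "G t (3/4) (1/2) = G t (-(1/4) + 1) (1/2)" by simp
  also have "\<dots> = - G t (-(1/4)) (1/2)" unfolding G_shift by simp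
  finally show ?thesis using V11 by simp
qed

lemma V13: "G t (3/4) (- (1/2)) = - G t (1/4) (1/2)"
  using G_per'[of t "3/4" "1/2"] V9 by simp

lemmas Vs = V1 V2 V3 V4 V5 V6 V7 V8 V9 V10 V11 V12 V13

lemma I1: "Im t > 0 \<Longrightarrow> (G t 0 0)^2 = (G (2*t) 0 0)^2 + (G (2*t) (1/2) 0)^2"
  using PF[of t 0 0 0 0] by (simp add: Vs power2_eq_square)

lemma I2: "Im t > 0 \<Longrightarrow> (G t 0 (1/2))^2 = (G (2*t) 0 0)^2 - (G (2*t) (1/2) 0)^2"
  using PF[of t 0 "1/2" 0 "1/2"] by (simp add: Vs power2_eq_square)

lemma I3: "Im t > 0 \<Longrightarrow> G t 0 0 * G t 0 (1/2) = (G (2*t) 0 (1/2))^2"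
  using PF[of t 0 0 0 "1/2"] by (simp add: Vs power2_eq_square)

lemma I4: "Im t > 0 \<Longrightarrow> G t (1/2) 0 * G t 0 0 = 2 * (G (2*t) (1/4) 0)^2"
  using PF[of t "1/2" 0 0 0] by (simp add: Vs power2_eq_square)

lemma I5: "Im t > 0 \<Longrightarrow> G t (1/2) 0 * G t 0 (1/2) = 2 * (G (2*t) (1/4) (1/2))^2"
  using PF[of t "1/2" 0 0 "1/2"] by (simp add: Vs power2_eq_square)


lemma prod_theta:
  assumes x: "Im x > 0" and y: "Im y > 0"
    and B: "B = (\<chi> i j. if i = j then (x + y) / 2 else (x - y) / 2)"
  shows "(\<Prod>(p,q)\<in>even_chars. cmod (theta2 p q B)) =
    cmod (G (2*x) 0 0 * G (2*y) 0 0 + G (2*x) (1/2) 0 * G (2*y) (1/2) 0) *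
    cmod (G (2*x) 0 0 * G (2*y) 0 0 - G (2*x) (1/2) 0 * G (2*y) (1/2) 0) *
    cmod (G (2*x) (1/2) 0 * G (2*y) 0 0 + G (2*x) 0 0 * G (2*y) (1/2) 0) *
    cmod (G (2*x) 0 0 * G (2*y) (1/2) 0 - G (2*x) (1/2) 0 * G (2*y) 0 0) *
    (cmod (G (2*x) 0 (1/2)) * cmod (G (2*y) 0 (1/2)))^2 *
    (4 * (cmod (G (2*x) (1/4) 0) * cmod (G (2*y) (1/4) 0))^2) *
    (4 * (cmod (G (2*x) (1/4) (1/2)) * cmod (G (2*y) (1/4) (1/2)))^2)"
  unfolding even_chars_eq
  by (simp add: vec2_eq_iff theta2_formula[OF x y B] Vs norm_mult power2_eq_square mult_ac)


lemma cube_powr: "(c::real) \<ge> 0 \<Longrightarrow> (c powr (2/3))^3 = c^2"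
proof (cases "c = 0")
  case False
  assume "c \<ge> 0"
  hence "c > 0" using False by simp
  hence "(c powr (2/3))^3 = c powr (of_nat 3 * (2/3))" by (subst powr_power) auto
  also have "\<dots> = c powr 2" by simp
  also have "\<dots> = c^2" using \<open>c > 0\<close> by (simp add: powr_numeral)
  finally show ?thesis .
qed simp

lemma ff_cube: "Im s > 0 \<Longrightarrow> (ff s)^3 = Im s * sqrt (Im s) * (cmod (jtheta2 s * jtheta3 s * jtheta4 s))^2"
proof -
  assume h: "Im s > 0"
  have "(ff s)^3 = (sqrt (Im s))^3 * ((cmod (jtheta2 s * jtheta3 s * jtheta4 s)) powr (2/3))^3"
    unfolding ff_def by (simp add: power_mult_distrib)
  also have "(sqrt (Im s))^3 = Im s * sqrt (Im s)"
    using h by (simp add: power3_eq_cube)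
  also have "((cmod (jtheta2 s * jtheta3 s * jtheta4 s)) powr (2/3))^3 = (cmod (jtheta2 s * jtheta3 s * jtheta4 s))^2"
    by (rule cube_powr) simp
  finally show ?thesis .
qed

lemma powr52: "(a::real) > 0 \<Longrightarrow> b > 0 \<Longrightarrow> (a*b) powr (5/2) = a^2 * b^2 * sqrt a * sqrt b"
proof -
  assume a: "a > 0" and b: "b > 0"
  have "(a*b) powr (5/2) = (a*b) powr (2 + 1/2)" by simp
  also have "\<dots> = (a*b) powr 2 * (a*b) powr (1/2)" by (rule powr_add)
  also have "\<dots> = (a*b)^2 * sqrt (a*b)" using a b by (simp add: powr_numeral powr_half_sqrt)
  finally show ?thesis by (simp add: real_sqrt_mult power_mult_distrib)
qed

theorem lemma5:
  fixes x y :: complex and B :: "complex^2^2"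
  assumes "Im x > 0" and "Im y > 0"
    and "B = (\<chi> i j. if i = j then (x + y) / 2 else (x - y) / 2)"
  shows "FF B = 1/4 * (ff x)^3 * (ff y)^3 * Im x * Im y *
           cmod ((jtheta3 x)^4 * (jtheta4 y)^4 - (jtheta4 x)^4 * (jtheta3 y)^4)"
proof -
  note x = assms(1) and y = assms(2) and BB = assms(3)
  define a where "a = Im x"
  define b where "b = Im y"
  have a: "a > 0" and b: "b > 0" using x y a_def b_def by auto
  have det: "det (Im_mat B) = a * b"
    unfolding Im_mat_def BB det_2 a_def b_def by (simp add: field_simps power2_eq_square)
  define A2 where "A2 = G x (1/2) 0"
  define A3 where "A3 = G x 0 0"
  define A4 where "A4 = G x 0 (1/2)"
  define C2 where "C2 = G y (1/2) 0"
  define C3 where "C3 = G y 0 0"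
  define C4 where "C4 = G y 0 (1/2)"
  define X0 where "X0 = G (2*x) 0 0"
  define X2 where "X2 = G (2*x) (1/2) 0"
  define X4 where "X4 = G (2*x) 0 (1/2)"
  define H where "H = G (2*x) (1/4) 0"
  define K where "K = G (2*x) (1/4) (1/2)"
  define Y0 where "Y0 = G (2*y) 0 0"
  define Y2 where "Y2 = G (2*y) (1/2) 0"
  define Y4 where "Y4 = G (2*y) 0 (1/2)"
  define L where "L = G (2*y) (1/4) 0"
  define M where "M = G (2*y) (1/4) (1/2)"
  have i1x: "A3^2 = X0^2 + X2^2" using I1[OF x] unfolding A3_def X0_def X2_def .
  have i2x: "A4^2 = X0^2 - X2^2" using I2[OF x] unfolding A4_def X0_def X2_def .
  have i3x: "A3 * A4 = X4^2" using I3[OF x] unfolding A3_def A4_def X4_def .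
  have i4x: "A2 * A3 = 2 * H^2" using I4[OF x] unfolding A2_def A3_def H_def .
  have i5x: "A2 * A4 = 2 * K^2" using I5[OF x] unfolding A2_def A4_def K_def .
  have i1y: "C3^2 = Y0^2 + Y2^2" using I1[OF y] unfolding C3_def Y0_def Y2_def .
  have i2y: "C4^2 = Y0^2 - Y2^2" using I2[OF y] unfolding C4_def Y0_def Y2_def .
  have i3y: "C3 * C4 = Y4^2" using I3[OF y] unfolding C3_def C4_def Y4_def .
  have i4y: "C2 * C3 = 2 * L^2" using I4[OF y] unfolding C2_def C3_def L_def .
  have i5y: "C2 * C4 = 2 * M^2" using I5[OF y] unfolding C2_def C4_def M_def .
  define D where "D = A3^4 * C4^4 - A4^4 * C3^4"
  have Deq: "D = (X0^2+X2^2)^2 * (Y0^2-Y2^2)^2 - (X0^2-X2^2)^2 * (Y0^2+Y2^2)^2"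
  proof -
    have "D = (A3^2)^2 * (C4^2)^2 - (A4^2)^2 * (C3^2)^2"
      unfolding D_def by (simp flip: power_mult)
    thus ?thesis unfolding i1x i2x i1y i2y .
  qed
  have P: "4 * ((X0*Y0 + X2*Y2) * (X0*Y0 - X2*Y2) * (X2*Y0 + X0*Y2) * (X0*Y2 - X2*Y0)) = - D"
    unfolding Deq by algebra
  have Pn: "cmod (X0*Y0 + X2*Y2) * cmod (X0*Y0 - X2*Y2) * cmod (X2*Y0 + X0*Y2) * cmod (X0*Y2 - X2*Y0) = cmod D / 4"
    using arg_cong[OF P, of cmod] by (simp add: norm_mult)
  have Q: "(cmod X4 * cmod Y4)^2 = cmod A3 * cmod A4 * (cmod C3 * cmod C4)"
    using arg_cong[OF i3x, of cmod] arg_cong[OF i3y, of cmod]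
    by (simp add: norm_mult norm_power power_mult_distrib)
  have R1: "4 * (cmod H * cmod L)^2 = cmod A2 * cmod A3 * (cmod C2 * cmod C3)"
    using arg_cong[OF i4x, of cmod] arg_cong[OF i4y, of cmod]
    by (simp add: norm_mult norm_power power_mult_distrib)
  have R2: "4 * (cmod K * cmod M)^2 = cmod A2 * cmod A4 * (cmod C2 * cmod C4)"
    using arg_cong[OF i5x, of cmod] arg_cong[OF i5y, of cmod]
    by (simp add: norm_mult norm_power power_mult_distrib)
  have Pi: "(\<Prod>(p,q)\<in>even_chars. cmod (theta2 p q B)) =
      cmod D / 4 * (cmod A2 * cmod A3 * cmod A4)^2 * (cmod C2 * cmod C3 * cmod C4)^2"
  proof -
    have "(\<Prod>(p,q)\<in>even_chars. cmod (theta2 p q B)) =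
      (cmod (X0*Y0 + X2*Y2) * cmod (X0*Y0 - X2*Y2) * cmod (X2*Y0 + X0*Y2) * cmod (X0*Y2 - X2*Y0)) *
      (cmod X4 * cmod Y4)^2 * (4 * (cmod H * cmod L)^2) * (4 * (cmod K * cmod M)^2)"
      unfolding prod_theta[OF x y BB] X0_def X2_def X4_def Y0_def Y2_def Y4_def H_def K_def L_def M_def
      by (simp only: mult.assoc)
    also have "\<dots> = cmod D / 4 * (cmod A2 * cmod A3 * cmod A4)^2 * (cmod C2 * cmod C3 * cmod C4)^2"
      unfolding Pn Q R1 R2 by (simp add: power2_eq_square mult_ac)
    finally show ?thesis .
  qed
  have "FF B = (a*b) powr (5/2) * (cmod D / 4 * (cmod A2 * cmod A3 * cmod A4)^2 * (cmod C2 * cmod C3 * cmod C4)^2)"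
    unfolding FF_def det Pi ..
  also have "\<dots> = 1/4 * (a * sqrt a * (cmod (A2 * A3 * A4))^2) * (b * sqrt b * (cmod (C2 * C3 * C4))^2) * a * b * cmod D"
    unfolding powr52[OF a b] by (simp add: norm_mult power2_eq_square mult_ac)
  also have "\<dots> = 1/4 * (ff x)^3 * (ff y)^3 * Im x * Im y *
           cmod ((jtheta3 x)^4 * (jtheta4 y)^4 - (jtheta4 x)^4 * (jtheta3 y)^4)"
    unfolding ff_cube[OF x] ff_cube[OF y] jtheta2_G jtheta3_G jtheta4_G
      A2_def A3_def A4_def C2_def C3_def C4_def D_def a_def b_def ..
  finally show ?thesis .
qed


end
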